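(* Let $\mathbb{K}$ be a field of characteristic zero, let $u,v\in\mathbb{K}$ with $uv\neq 0$, let $a_1,\dots,a_\ell\in\mathbb{K}$, and let $\alpha_1\le\alpha_2\le\dots\le\alpha_\ell$ and $\beta_1,\dots,\beta_\ell$ be nonnegative integers. Let \[P=\sum_{j=1}^{\ell} a_j X^{\alpha_j}(uX+v)^{\beta_j}\in\mathbb{K}[X].\] If $P\neq 0$, then \[\operatorname{val}(P)\le \max_{1\le j\le \ell}\left(\alpha_j+\binom{\ell+1-j}{2}\right).\]
   Context: For a nonzero polynomial $P\in\mathbb{K}[X]$, its valuation $\operatorname{val}(P)$ is the largest integer $v$ such that $X^v$ divides $P$. *)

theory Defs
  imports "HOL-Computational_Algebra.Polynomial"
begin

definition val :: "'a::comm_semiring_1 poly \<Rightarrow> nat" where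
  "val P = (GREATEST v. [:0, 1:] ^ v dvd P)"

end

theory Submission imports Defs "Jordan_Normal_Form.Determinant" begin
hide_const (open) Module.module.smult

abbreviation pX :: "'a::comm_semiring_1 poly" where "pX \<equiv> [:0, 1:]"

lemma pX_pow_monom: "(pX::'a::comm_semiring_1 poly) ^ n = monom 1 n"
  by (simp add: monom_altdef)

lemma pX_pow_dvd_iff: "(pX::'a::comm_semiring_1 poly) ^ n dvd p \<longleftrightarrow> (\<forall>k<n. coeff p k = 0)"
  using monom_1_dvd_iff'[of n p] by (simp add: pX_pow_monom)

lemma pX_pow_dvd_iff_order: "(p::'a::idom poly) \<noteq> 0 \<Longrightarrow> pX ^ n dvd p \<longleftrightarrow> n \<le> order 0 p"
  using monom_1_dvd_iff[of p n] by (simp add: pX_pow_monom)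

lemma coeff_below_order: "k < order 0 (p::'a::idom poly) \<Longrightarrow> coeff p k = 0"
proof (cases "p = 0")
  case False
  assume k: "k < order 0 p"
  have "pX ^ order 0 p dvd p" using pX_pow_dvd_iff_order[OF False] by simp
  then show ?thesis using k pX_pow_dvd_iff by blast
qed simp

lemma coeff_at_order: "(p::'a::idom poly) \<noteq> 0 \<Longrightarrow> coeff p (order 0 p) \<noteq> 0"
proof
  assume p: "p \<noteq> 0" and c: "coeff p (order 0 p) = 0"
  have "\<forall>k<Suc (order 0 p). coeff p k = 0"
    using c coeff_below_order[of _ p] less_Suc_eq by auto
  then have "pX ^ Suc (order 0 p) dvd p" using pX_pow_dvd_iff by blast
  then have "Suc (order 0 p) \<le> order 0 p" using pX_pow_dvd_iff_order[OF p, of "Suc (order 0 p)"] by blast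
  then show False by simp
qed

lemma val_eq_order: "(p::'a::idom poly) \<noteq> 0 \<Longrightarrow> val p = order 0 p"
  unfolding val_def
proof (rule Greatest_equality)
  assume p: "p \<noteq> 0"
  show "pX ^ order 0 p dvd p" using pX_pow_dvd_iff_order[OF p] by simp
  show "\<And>y. pX ^ y dvd p \<Longrightarrow> y \<le> order 0 p" using pX_pow_dvd_iff_order[OF p] by simp
qed

lemma coeff_hpd: "coeff ((pderiv ^^ r) f) t = (\<Prod>s<r. of_nat (t + r - s)) * coeff f (t + r)"
proof (induction r arbitrary: t)
  case 0
  then show ?case by simp
next
  case (Suc r)
  have "coeff ((pderiv ^^ Suc r) f) t = of_nat (Suc t) * coeff ((pderiv ^^ r) f) (Suc t)"
    by (simp add: coeff_pderiv)
  also have "\<dots> = of_nat (Suc t) * ((\<Prod>s<r. of_nat (Suc t + r - s)) * coeff f (Suc t + r))"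
    by (simp add: Suc.IH)
  also have "\<dots> = (\<Prod>s<Suc r. of_nat (t + Suc r - s)) * coeff f (t + Suc r)"
    by (simp add: prod.lessThan_Suc mult_ac)
  finally show ?case .
qed

lemma prod_of_nat_diff: "(\<Prod>s<r. (of_nat (n - s) :: 'a::comm_ring_1)) = (\<Prod>s<r. of_nat n - of_nat s)"
proof (cases "r \<le> n")
  case True
  then show ?thesis by (intro prod.cong) (auto simp: of_nat_diff)
next
  case False
  then have "n \<in> {..<r}" by auto
  have "(\<Prod>s<r. (of_nat (n - s) :: 'a)) = 0"
    using \<open>n \<in> {..<r}\<close> by (intro prod_zero bexI[of _ n]) auto
  moreover have "(\<Prod>s<r. (of_nat n - of_nat s :: 'a)) = 0"
    using \<open>n \<in> {..<r}\<close> by (intro prod_zero bexI[of _ n]) auto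
  ultimately show ?thesis by simp
qed

lemma coeff_xr_hpd: "coeff (pX ^ r * (pderiv ^^ r) f) n = (\<Prod>s<r. of_nat (n - s)) * coeff f n"
proof (cases "r \<le> n")
  case True
  have "coeff (pX ^ r * (pderiv ^^ r) f) n = coeff ((pderiv ^^ r) f) (n - r)"
    using True by (simp add: pX_pow_monom coeff_monom_mult)
  also have "\<dots> = (\<Prod>s<r. of_nat (n - r + r - s)) * coeff f (n - r + r)" by (rule coeff_hpd)
  also have "\<dots> = (\<Prod>s<r. of_nat (n - s)) * coeff f n" using True by simp
  finally show ?thesis .
next
  case False
  then have "n \<in> {..<r}" by auto
  then have "(\<Prod>s<r. (of_nat (n - s)::'a)) = 0" by (intro prod_zero bexI[of _ n]) auto
  then show ?thesis using False by (simp add: pX_pow_monom coeff_monom_mult)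
qed

lemma xr_hpd_dvd: "pX ^ n dvd f \<Longrightarrow> pX ^ n dvd pX ^ r * (pderiv ^^ r) f"
  unfolding pX_pow_dvd_iff by (simp add: coeff_xr_hpd)

lemma sum_lessThan_id_choose2: "(\<Sum>r<k. r) = k choose 2"
proof (induction k)
  case 0 then show ?case by simp
next
  case (Suc k)
  have "Suc k choose 2 = k + (k choose 2)"
    using binomial_Suc_Suc[of k 1] by (simp add: numeral_2_eq_2)
  then show ?case using Suc by simp
qed

definition wr :: "nat \<Rightarrow> (nat \<Rightarrow> 'a::idom poly) \<Rightarrow> 'a poly" where
  "wr k F = det (mat k k (\<lambda>(r,i). (pderiv ^^ r) (F i)))"

lemma wr_leibniz: "wr k F = (\<Sum>p\<in>{p. p permutes {..<k}}. of_int (sign p) * (\<Prod>r<k. (pderiv ^^ r) (F (p r))))"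
proof -
  have "wr k F = (\<Sum>p\<in>{p. p permutes {0..<k}}. of_int (sign p) *
     (\<Prod>r = 0..<k. (mat k k (\<lambda>(r,i). (pderiv ^^ r) (F i))) $$ (r, p r)))"
    unfolding wr_def by (rule det_def') simp
  also have "\<dots> = (\<Sum>p\<in>{p. p permutes {..<k}}. of_int (sign p) * (\<Prod>r<k. (pderiv ^^ r) (F (p r))))"
  proof (intro sum.cong refl arg_cong2[where f="(*)"] prod.cong)
    fix p r assume p: "p \<in> {p. p permutes {..<k}}" and r: "r \<in> {..<k}"
    have "p r < k" using p r permutes_in_image by fastforce
    then show "mat k k (\<lambda>(r,i). (pderiv ^^ r) (F i)) $$ (r, p r) = (pderiv ^^ r) (F (p r))"
      using r by simp
  qed (auto simp: atLeast0LessThan)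
  finally show ?thesis .
qed

lemma wr_scaled: fixes G :: "'a::idom poly"
  shows "G ^ (k choose 2) * wr k F =
   (\<Sum>p\<in>{p. p permutes {..<k}}. of_int (sign p) * (\<Prod>r<k. G ^ r * (pderiv ^^ r) (F (p r))))"
proof -
  have "G ^ (k choose 2) = (\<Prod>r<k. G ^ r)"
    by (simp add: power_sum sum_lessThan_id_choose2[symmetric])
  then show ?thesis
    by (simp add: wr_leibniz sum_distrib_left prod.distrib mult_ac)
qed

lemma wr_lower: fixes F :: "nat \<Rightarrow> 'a::idom poly"
  assumes "\<forall>i<k. pX ^ n i dvd F i"
  shows "pX ^ (\<Sum>i<k. n i) dvd pX ^ (k choose 2) * wr k F"
  unfolding wr_scaled
proof (intro dvd_sum dvd_mult)
  fix p assume p: "p \<in> {p. p permutes {..<k}}"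
  have "(\<Sum>i<k. n i) = (\<Sum>r<k. n (p r))"
    using p sum.permute[of p "{..<k}" n] by auto
  then have "pX ^ (\<Sum>i<k. n i) = (\<Prod>r<k. pX ^ n (p r))" by (simp add: power_sum)
  also have "\<dots> dvd (\<Prod>r<k. pX ^ r * (pderiv ^^ r) (F (p r)))"
  proof (rule prod_dvd_prod)
    fix r assume "r \<in> {..<k}"
    then have "p r < k" using p permutes_in_image by fastforce
    then show "pX ^ n (p r) dvd pX ^ r * (pderiv ^^ r) (F (p r))"
      using assms xr_hpd_dvd by blast
  qed
  finally show "pX ^ (\<Sum>i<k. n i) dvd (\<Prod>r<k. pX ^ r * (pderiv ^^ r) (F (p r)))" .
qed

lemma det_mat_leibniz: "det (mat k k f) = (\<Sum>p\<in>{p. p permutes {..<k}}. of_int (sign p) * (\<Prod>r<k. f (r, p r)))"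
proof -
  have "det (mat k k f) = (\<Sum>p\<in>{p. p permutes {0..<k}}. of_int (sign p) *
     (\<Prod>r = 0..<k. (mat k k f) $$ (r, p r)))"
    by (rule det_def') simp
  also have "\<dots> = (\<Sum>p\<in>{p. p permutes {..<k}}. of_int (sign p) * (\<Prod>r<k. f (r, p r)))"
  proof (intro sum.cong refl arg_cong2[where f="(*)"] prod.cong)
    fix p r assume p: "p \<in> {p. p permutes {..<k}}" and r: "r \<in> {..<k}"
    have "p r < k" using p r permutes_in_image by fastforce
    then show "mat k k f $$ (r, p r) = f (r, p r)" using r by simp
  qed (auto simp: atLeast0LessThan)
  finally show ?thesis .
qed

lemma coeff_mult_low: fixes p q :: "'a::idom poly"
  assumes "pX ^ a dvd p" "pX ^ b dvd q"
  shows "coeff (p * q) (a + b) = coeff p a * coeff q b"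
proof -
  obtain p' where p: "p = pX ^ a * p'" using assms(1) by (auto elim: dvdE)
  obtain q' where q: "q = pX ^ b * q'" using assms(2) by (auto elim: dvdE)
  have "p * q = pX ^ (a + b) * (p' * q')" by (simp add: p q power_add mult_ac)
  then have "coeff (p * q) (a + b) = coeff (p' * q') 0"
    by (simp only: pX_pow_monom coeff_monom_mult) simp
  moreover have "coeff p a = coeff p' 0" by (simp only: p pX_pow_monom coeff_monom_mult) simp
  moreover have "coeff q b = coeff q' 0" by (simp only: q pX_pow_monom coeff_monom_mult) simp
  ultimately show ?thesis by (simp add: coeff_mult_0)
qed

lemma coeff_prod_low: fixes h :: "nat \<Rightarrow> 'a::idom poly"
  assumes "finite A" "\<forall>r\<in>A. pX ^ m r dvd h r"
  shows "coeff (\<Prod>r\<in>A. h r) (\<Sum>r\<in>A. m r) = (\<Prod>r\<in>A. coeff (h r) (m r))"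
  using assms
proof (induction A rule: finite_induct)
  case empty then show ?case by simp
next
  case (insert x A)
  have d: "pX ^ (\<Sum>r\<in>A. m r) dvd (\<Prod>r\<in>A. h r)"
    unfolding power_sum using insert by (intro prod_dvd_prod) auto
  show ?case using insert coeff_mult_low[OF _ d, of "m x" "h x"] by simp
qed

definition ffp :: "nat \<Rightarrow> 'a::comm_ring_1 poly" where "ffp r = (\<Prod>s<r. [:- of_nat s, 1:])"

lemma ffp_deg_lc: "degree (ffp r :: 'a::idom poly) = r \<and> coeff (ffp r :: 'a poly) r = 1"
proof (induction r)
  case 0 then show ?case by (simp add: ffp_def)
next
  case (Suc r)
  have e: "ffp (Suc r) = ffp r * [:- of_nat r, 1:]" by (simp add: ffp_def)
  have nz: "(ffp r :: 'a poly) \<noteq> 0" using Suc by auto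
  have q: "[:- of_nat r, 1:] \<noteq> (0::'a poly)" by simp
  have "degree (ffp r * [:- of_nat r, 1::'a:]) = degree (ffp r :: 'a poly) + degree [:- of_nat r, 1::'a:]"
    by (rule degree_mult_eq[OF nz q])
  then have d: "degree (ffp (Suc r) :: 'a poly) = Suc r" using Suc by (simp only: e) simp
  have "lead_coeff (ffp (Suc r) :: 'a poly) = lead_coeff (ffp r :: 'a poly) * lead_coeff [:- of_nat r, 1:]"
    unfolding e by (rule lead_coeff_mult)
  then show ?case using d Suc by simp
qed

lemma poly_ffp: "poly (ffp r) x = (\<Prod>s<r. x - of_nat s)"
  by (simp add: ffp_def poly_prod)

lemma ff_indep: "(\<Sum>r<k. smult (c r) (ffp r :: 'a::idom poly)) = 0 \<Longrightarrow> \<forall>r<k. c r = 0"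
proof (induction k)
  case 0 then show ?case by simp
next
  case (Suc k)
  have c0: "coeff (\<Sum>r<k. smult (c r) (ffp r :: 'a poly)) k = 0"
    unfolding coeff_sum
  proof (intro sum.neutral ballI)
    fix r assume "r \<in> {..<k}"
    then have "degree (ffp r :: 'a poly) < k" using ffp_deg_lc[of r, where 'a='a] by auto
    then show "coeff (smult (c r) (ffp r :: 'a poly)) k = 0" by (simp add: coeff_eq_0)
  qed
  have "coeff (\<Sum>r<Suc k. smult (c r) (ffp r :: 'a poly)) k = 0" using Suc.prems by simp
  then have ck: "c k = 0" using c0 ffp_deg_lc[of k, where 'a='a] by simp
  then have "(\<Sum>r<k. smult (c r) (ffp r :: 'a poly)) = 0" using Suc.prems by simp
  then show ?case using Suc.IH ck less_Suc_eq by auto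
qed

lemma det_ff_nonzero: fixes n :: "nat \<Rightarrow> nat"
  assumes inj: "inj_on n {..<k}"
  shows "det (mat k k (\<lambda>(r,i). (\<Prod>s<r. of_nat (n i - s) :: 'a::field_char_0))) \<noteq> 0"
proof
  define M where "M = mat k k (\<lambda>(r,i). (\<Prod>s<r. of_nat (n i - s) :: 'a))"
  assume "det (mat k k (\<lambda>(r,i). (\<Prod>s<r. of_nat (n i - s) :: 'a))) = 0"
  then have "det (transpose_mat M) = 0" using det_transpose[of M k] by (simp add: M_def)
  then obtain w where w: "w \<in> carrier_vec k" "w \<noteq> 0\<^sub>v k" "transpose_mat M *\<^sub>v w = 0\<^sub>v k"
    using det_0_iff_vec_prod_zero_field[of "transpose_mat M" k] by (auto simp: M_def)
  define q where "q = (\<Sum>r<k. smult (w $ r) (ffp r :: 'a poly))"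
  have root: "poly q (of_nat (n i)) = 0" if i: "i < k" for i
  proof -
    have "0 = (transpose_mat M *\<^sub>v w) $ i" using w(3) i by simp
    also have "\<dots> = (\<Sum>r<k. (\<Prod>s<r. of_nat (n i - s)) * w $ r)"
      using i w(1) by (simp add: M_def scalar_prod_def atLeast0LessThan)
    also have "\<dots> = poly q (of_nat (n i))"
      by (simp add: q_def poly_sum poly_ffp prod_of_nat_diff mult_ac)
    finally show ?thesis by simp
  qed
  show False
  proof (cases "q = 0")
    case True
    then have "\<forall>r<k. w $ r = 0" using ff_indep[of "\<lambda>r. w $ r" k] by (simp add: q_def)
    then have "w = 0\<^sub>v k" using w(1) by (intro eq_vecI) auto
    with w(2) show False by simp
  next
    case False
    have sub: "(of_nat \<circ> n) ` {..<k} \<subseteq> {x. poly q x = (0::'a)}" using root by auto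
    have "inj_on (of_nat \<circ> n :: nat \<Rightarrow> 'a) {..<k}"
      using inj by (intro comp_inj_on) (auto intro: inj_on_subset[OF inj_of_nat])
    then have "card ((of_nat \<circ> n :: nat \<Rightarrow> 'a) ` {..<k}) = k" using card_image by fastforce
    then have "k \<le> card {x. poly q x = (0::'a)}"
      using card_mono[OF poly_roots_finite[OF False] sub] by simp
    also have "\<dots> \<le> degree q" by (rule card_poly_roots_bound[OF False])
    also have "degree q \<le> k - 1" unfolding q_def
    proof (intro degree_sum_le)
      fix r assume "r \<in> {..<k}"
      then show "degree (smult (w $ r) (ffp r :: 'a poly)) \<le> k - 1"
        using ffp_deg_lc[of r, where 'a='a] degree_smult_le[of "w $ r" "ffp r :: 'a poly"] by auto
    qed simp
    finally have "k = 0" by simp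
    then have "w = 0\<^sub>v k" using w(1) by (intro eq_vecI) auto
    with w(2) show False by simp
  qed
qed

lemma coeff_of_int_mult: "coeff (of_int z * x) n = of_int z * coeff x n"
  by (simp add: of_int_poly)

lemma wr_nonzero: fixes F :: "nat \<Rightarrow> 'a::field_char_0 poly"
  assumes nz: "\<forall>i<k. F i \<noteq> 0" and inj: "inj_on (\<lambda>i. order 0 (F i)) {..<k}"
  shows "wr k F \<noteq> 0"
proof
  assume W: "wr k F = 0"
  define n where "n i = order 0 (F i)" for i
  define e where "e = (\<lambda>(r,i). (\<Prod>s<r. of_nat (n i - s) :: 'a))"
  define L where "L = (\<Prod>i<k. coeff (F i) (n i))"
  have dvdF: "pX ^ n i dvd F i" if "i < k" for i
    using pX_pow_dvd_iff_order[of "F i" "n i"] nz that n_def by auto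
  have "coeff (pX ^ (k choose 2) * wr k F) (\<Sum>i<k. n i) =
      (\<Sum>p\<in>{p. p permutes {..<k}}. of_int (sign p) *
          coeff (\<Prod>r<k. pX ^ r * (pderiv ^^ r) (F (p r))) (\<Sum>i<k. n i))"
    by (simp only: wr_scaled coeff_sum coeff_of_int_mult)
  also have "\<dots> = (\<Sum>p\<in>{p. p permutes {..<k}}. of_int (sign p) * ((\<Prod>r<k. e (r, p r)) * L))"
  proof (rule sum.cong[OF refl])
    fix p assume p: "p \<in> {p. p permutes {..<k}}"
    have pr: "r < k \<Longrightarrow> p r < k" for r using p permutes_in_image by fastforce
    have sp: "(\<Sum>i<k. n i) = (\<Sum>r<k. n (p r))" using p sum.permute[of p "{..<k}" n] by auto
    have "coeff (\<Prod>r<k. pX ^ r * (pderiv ^^ r) (F (p r))) (\<Sum>r<k. n (p r)) =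
        (\<Prod>r<k. coeff (pX ^ r * (pderiv ^^ r) (F (p r))) (n (p r)))"
      using pr by (intro coeff_prod_low) (auto intro!: xr_hpd_dvd dvdF)
    also have "\<dots> = (\<Prod>r<k. e (r, p r) * coeff (F (p r)) (n (p r)))"
      by (simp add: coeff_xr_hpd e_def)
    also have "\<dots> = (\<Prod>r<k. e (r, p r)) * (\<Prod>r<k. coeff (F (p r)) (n (p r)))"
      by (rule prod.distrib)
    also have "(\<Prod>r<k. coeff (F (p r)) (n (p r))) = L"
      unfolding L_def using p prod.permute[of p "{..<k}" "\<lambda>i. coeff (F i) (n i)"] by auto
    finally show "of_int (sign p) * coeff (\<Prod>r<k. pX ^ r * (pderiv ^^ r) (F (p r))) (\<Sum>i<k. n i) =
        of_int (sign p) * ((\<Prod>r<k. e (r, p r)) * L)" using sp by simp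
  qed
  also have "\<dots> = L * det (mat k k e)"
    by (simp add: det_mat_leibniz sum_distrib_left mult_ac)
  finally have key: "coeff (pX ^ (k choose 2) * wr k F) (\<Sum>i<k. n i) = L * det (mat k k e)" .
  have "L \<noteq> 0" unfolding L_def using nz coeff_at_order n_def by auto
  moreover have "det (mat k k e) \<noteq> 0"
    unfolding e_def using det_ff_nonzero[of n k] inj n_def by (simp add: inj_on_def)
  ultimately show False using key W by simp
qed

lemma dvd_pderiv_pow: fixes Q p :: "'a::idom poly"
  assumes "Q ^ m dvd p" shows "Q ^ (m - 1) dvd pderiv p"
proof (cases m)
  case 0 then show ?thesis by simp
next
  case (Suc m')
  obtain h where h: "p = Q ^ Suc m' * h" using assms Suc by (auto elim: dvdE)
  have "pderiv p = Q ^ Suc m' * pderiv h + h * (smult (of_nat (Suc m')) (Q ^ m') * pderiv Q)"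
    by (simp only: h pderiv_mult pderiv_power_Suc)
  also have "\<dots> = Q ^ m' * (Q * pderiv h + smult (of_nat (Suc m')) (h * pderiv Q))"
    by (simp add: algebra_simps)
  finally show ?thesis using Suc by simp
qed

lemma dvd_hpd_pow: fixes Q p :: "'a::idom poly"
  assumes "Q ^ m dvd p" shows "Q ^ (m - r) dvd (pderiv ^^ r) p"
proof (induction r)
  case 0 then show ?case using assms by simp
next
  case (Suc r)
  then have "Q ^ (m - r - 1) dvd pderiv ((pderiv ^^ r) p)" by (rule dvd_pderiv_pow)
  then show ?case by simp
qed

lemma hpd_zero: "degree p < r \<Longrightarrow> (pderiv ^^ r) p = 0"
  by (rule poly_eqI) (simp add: coeff_hpd coeff_eq_0)

lemma Q_hpd_dvd: fixes u v :: "'a::idom"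
  shows "[:v,u:] ^ b dvd [:v,u:] ^ r * (pderiv ^^ r) (pX ^ a * [:v,u:] ^ b)"
proof -
  have "[:v,u:] ^ (b - r) dvd (pderiv ^^ r) (pX ^ a * [:v,u:] ^ b)"
    by (rule dvd_hpd_pow) simp
  then have "[:v,u:] ^ r * [:v,u:] ^ (b - r) dvd [:v,u:] ^ r * (pderiv ^^ r) (pX ^ a * [:v,u:] ^ b)"
    by (rule mult_dvd_mono[OF dvd_refl])
  moreover have "[:v,u:] ^ b dvd [:v,u:] ^ r * [:v,u:] ^ (b - r)"
    unfolding power_add[symmetric] by (rule le_imp_power_dvd) simp
  ultimately show ?thesis by (rule dvd_trans[rotated])
qed

lemma degQ_pow: "degree ([:v,u:] ^ r :: 'a::idom poly) \<le> r"
proof -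
  have "degree ([:v,u:]::'a poly) \<le> 1" by (simp add: degree_pCons_eq_if)
  then show ?thesis
    using degree_power_le[of "[:v,u:]" r] by (metis dual_order.trans mult.left_neutral mult_le_mono1)
qed

lemma degree_hpd_le: "degree ((pderiv ^^ r) p) \<le> degree p - r"
  by (rule degree_le) (auto simp: coeff_hpd coeff_eq_0)

lemma Q_hpd_deg: fixes u v :: "'a::idom"
  shows "degree ([:v,u:] ^ r * (pderiv ^^ r) (pX ^ a * [:v,u:] ^ b)) \<le> a + b"
proof -
  let ?f = "pX ^ a * [:v,u:] ^ b :: 'a poly"
  have df: "degree ?f \<le> a + b"
  proof -
    have "degree ?f \<le> degree (pX ^ a :: 'a poly) + degree ([:v,u:] ^ b)" by (rule degree_mult_le)
    also have "\<dots> \<le> a + b"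
    proof (rule add_mono)
      show "degree (pX ^ a :: 'a poly) \<le> a" using degree_power_le[of "pX::'a poly" a] by simp
      show "degree ([:v,u:] ^ b) \<le> b" by (rule degQ_pow)
    qed
    finally show ?thesis .
  qed
  show ?thesis
  proof (cases "r \<le> degree ?f")
    case True
    have "degree ([:v,u:] ^ r * (pderiv ^^ r) ?f) \<le> degree ([:v,u:] ^ r) + degree ((pderiv ^^ r) ?f)"
      by (rule degree_mult_le)
    also have "\<dots> \<le> r + (degree ?f - r)"
      using degQ_pow[of v u r] degree_hpd_le[of r ?f] by linarith
    also have "\<dots> \<le> a + b" using True df by simp
    finally show ?thesis .
  next
    case False
    then show ?thesis by (simp add: hpd_zero)
  qed
qed

lemma wr_upper: fixes u v :: "'a::idom"
  assumes uv: "u \<noteq> 0" "v \<noteq> 0" and F: "\<forall>i<k. F i = pX ^ a i * [:v,u:] ^ b i"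
    and W: "wr k F \<noteq> 0"
  shows "order 0 (wr k F) \<le> (\<Sum>i<k. a i)"
proof -
  let ?Q = "[:v,u:]"
  let ?T = "\<lambda>p. (\<Prod>r<k. ?Q ^ r * (pderiv ^^ r) (F (p r)))"
  have eq: "?Q ^ (k choose 2) * wr k F = (\<Sum>p\<in>{p. p permutes {..<k}}. of_int (sign p) * ?T p)"
    by (rule wr_scaled)
  have dv: "?Q ^ (\<Sum>i<k. b i) dvd ?Q ^ (k choose 2) * wr k F"
    unfolding eq
  proof (intro dvd_sum dvd_mult)
    fix p assume p: "p \<in> {p. p permutes {..<k}}"
    have "(\<Sum>i<k. b i) = (\<Sum>r<k. b (p r))"
      using p sum.permute[of p "{..<k}" b] by auto
    then have "?Q ^ (\<Sum>i<k. b i) = (\<Prod>r<k. ?Q ^ b (p r))" by (simp add: power_sum)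
    also have "\<dots> dvd ?T p"
    proof (rule prod_dvd_prod)
      fix r assume "r \<in> {..<k}"
      then have "p r < k" using p permutes_in_image by fastforce
      then show "?Q ^ b (p r) dvd ?Q ^ r * (pderiv ^^ r) (F (p r))"
        using F Q_hpd_dvd by metis
    qed
    finally show "?Q ^ (\<Sum>i<k. b i) dvd ?T p" .
  qed
  have dg: "degree (?Q ^ (k choose 2) * wr k F) \<le> (\<Sum>i<k. a i + b i)"
    unfolding eq
  proof (intro degree_sum_le)
    fix p assume p: "p \<in> {p. p permutes {..<k}}"
    have "degree (of_int (sign p) * ?T p) \<le> degree (?T p)"
      by (simp add: of_int_poly degree_smult_le)
    also have "\<dots> \<le> (\<Sum>r<k. degree (?Q ^ r * (pderiv ^^ r) (F (p r))))"
      using degree_prod_sum_le[of "{..<k}" "\<lambda>r. ?Q ^ r * (pderiv ^^ r) (F (p r))"] by simp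
    also have "\<dots> \<le> (\<Sum>r<k. a (p r) + b (p r))"
    proof (rule sum_mono)
      fix r assume "r \<in> {..<k}"
      then have "p r < k" using p permutes_in_image by fastforce
      then show "degree (?Q ^ r * (pderiv ^^ r) (F (p r))) \<le> a (p r) + b (p r)"
        using F Q_hpd_deg by metis
    qed
    also have "\<dots> = (\<Sum>i<k. a i + b i)"
      using p sum.permute[of p "{..<k}" "\<lambda>i. a i + b i"] by auto
    finally show "degree (of_int (sign p) * ?T p) \<le> (\<Sum>i<k. a i + b i)" .
  qed (simp add: finite_permutations)
  obtain D where D: "?Q ^ (k choose 2) * wr k F = ?Q ^ (\<Sum>i<k. b i) * D"
    using dv by (auto elim: dvdE)
  have Qnz: "?Q \<noteq> 0" using uv by simp
  have Dnz: "D \<noteq> 0" using D W Qnz by auto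
  have dQ: "degree (?Q ^ m) = m" for m using uv by (simp add: degree_power_eq)
  have "degree (?Q ^ (\<Sum>i<k. b i) * D) = degree (?Q ^ (\<Sum>i<k. b i)) + degree D"
    by (rule degree_mult_eq) (use Dnz Qnz in auto)
  then have "degree (?Q ^ (\<Sum>i<k. b i) * D) = (\<Sum>i<k. b i) + degree D" by (simp only: dQ)
  then have degD: "degree D \<le> (\<Sum>i<k. a i)" using dg D by (simp add: sum.distrib)
  have o1: "order 0 (?Q ^ m) = 0" for m using uv by (intro order_0I) simp
  have n1: "?Q ^ (k choose 2) * wr k F \<noteq> 0" using W Qnz uv by simp
  have n2: "?Q ^ (\<Sum>i<k. b i) * D \<noteq> 0" using Dnz Qnz uv by simp
  have "order 0 (?Q ^ (k choose 2) * wr k F) = order 0 (wr k F)"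
    by (simp only: order_mult[OF n1] o1 add_0)
  moreover have "order 0 (?Q ^ (\<Sum>i<k. b i) * D) = order 0 D"
    by (simp only: order_mult[OF n2] o1 add_0)
  ultimately have "order 0 (wr k F) = order 0 D" using D by simp
  also have "\<dots> \<le> degree D" by (rule order_degree[OF Dnz])
  finally show ?thesis using degD by simp
qed

definition lin :: "(nat \<Rightarrow> 'a::comm_ring_1 poly) \<Rightarrow> nat \<Rightarrow> 'a poly \<Rightarrow> bool" where
  "lin G r p \<longleftrightarrow> (\<exists>c. p = (\<Sum>q<r. smult (c q) (G q)))"

lemma pCons_add0: "[:a + b:] = [:a:] + [:b:]" by simp
lemma pCons_mult0: "[:a * b:] = [:a:] * ([:b:] :: 'a::comm_semiring_1 poly)" by (simp add: mult.commute)

lemma pCons_sum0: "[:sum f A:] = (\<Sum>x\<in>A. [:f x:])"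
proof (induction A rule: infinite_finite_induct)
  case (insert x F)
  then show ?case by (simp only: sum.insert[OF insert(1,2)] pCons_add0 insert(3))
qed simp_all

lemma pCons_prod0: "[:prod f A:] = (\<Prod>x\<in>A. [:f x:] :: 'a::comm_semiring_1 poly)"
proof (induction A rule: infinite_finite_induct)
  case (insert x F)
  then show ?case by (simp only: prod.insert[OF insert(1,2)] pCons_mult0 insert(3))
qed simp_all

lemma det_const_poly: "det (mat k k (\<lambda>(q,i). [:f q i:])) = [:det (mat k k (\<lambda>(q,i). f q i)):]"
proof -
  have "[:det (mat k k (\<lambda>(q,i). f q i)):] = (\<Sum>p\<in>{p. p permutes {..<k}}. [:of_int (sign p) * (\<Prod>r<k. f r (p r)):])"
    by (simp add: det_mat_leibniz pCons_sum0)
  also have "\<dots> = (\<Sum>p\<in>{p. p permutes {..<k}}. of_int (sign p) * (\<Prod>r<k. [:f r (p r):]))"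
    by (intro sum.cong refl) (simp add: of_int_poly pCons_prod0[symmetric])
  finally show ?thesis by (simp add: det_mat_leibniz)
qed

lemma wr_lin: fixes F H :: "nat \<Rightarrow> 'a::idom poly"
  assumes "\<forall>i<k. lin H k (F i)" shows "\<exists>c. wr k F = smult c (wr k H)"
proof -
  have "\<forall>i. \<exists>c. i < k \<longrightarrow> F i = (\<Sum>q<k. smult (c q) (H q))"
    using assms unfolding lin_def by blast
  then obtain B where B: "\<forall>i. i < k \<longrightarrow> F i = (\<Sum>q<k. smult (B i q) (H q))"
    by (metis choice)
  define MH where "MH = mat k k (\<lambda>(r,i). (pderiv ^^ r) (H i))"
  define MB where "MB = mat k k (\<lambda>(q,i). [:B i q:])"
  have MHc: "MH \<in> carrier_mat k k" and MBc: "MB \<in> carrier_mat k k" by (auto simp: MH_def MB_def)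
  have "mat k k (\<lambda>(r,i). (pderiv ^^ r) (F i)) = MH * MB"
  proof (rule eq_matI)
    fix r i assume r: "r < dim_row (MH * MB)" and i: "i < dim_col (MH * MB)"
    then have rk: "r < k" and ik: "i < k" by (auto simp: MH_def MB_def)
    have "(MH * MB) $$ (r,i) = (\<Sum>q\<in>{0..<k}. row MH r $ q * col MB i $ q)"
      using rk ik MHc MBc by (simp add: scalar_prod_def)
    also have "\<dots> = (\<Sum>q<k. (pderiv ^^ r) (H q) * [:B i q:])"
      using rk ik by (auto simp: MH_def MB_def atLeast0LessThan intro!: sum.cong)
    also have "\<dots> = (pderiv ^^ r) (F i)"
      using B ik by (simp add: higher_pderiv_sum higher_pderiv_smult mult.commute)
    finally show "mat k k (\<lambda>(r,i). (pderiv ^^ r) (F i)) $$ (r,i) = (MH * MB) $$ (r,i)"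
      using rk ik by simp
  qed (auto simp: MH_def MB_def)
  then have "wr k F = det MH * det MB" unfolding wr_def using det_mult[OF MHc MBc] by simp
  also have "det MB = [:det (mat k k (\<lambda>(q,i). B i q)):]" unfolding MB_def by (rule det_const_poly)
  finally have "wr k F = smult (det (mat k k (\<lambda>(q,i). B i q))) (wr k H)"
    by (simp add: wr_def MH_def mult.commute)
  then show ?thesis by blast
qed

lemma smult_sum_right: "smult a (\<Sum>i\<in>S. f i) = (\<Sum>i\<in>S. smult a (f i))"
  by (induct S rule: infinite_finite_induct) (auto simp: smult_add_right)

lemma lin_add: "lin G r p \<Longrightarrow> lin G r q \<Longrightarrow> lin G r (p + q)"
  unfolding lin_def
proof (elim exE)
  fix c d assume "p = (\<Sum>m<r. smult (c m) (G m))" "q = (\<Sum>m<r. smult (d m) (G m))"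
  then have "p + q = (\<Sum>m<r. smult (c m + d m) (G m))" by (simp add: sum.distrib smult_add_left)
  then show "\<exists>c. p + q = (\<Sum>m<r. smult (c m) (G m))" by (rule exI[of _ "\<lambda>m. c m + d m"])
qed

lemma lin_smult: "lin G r p \<Longrightarrow> lin G r (smult a p)"
  unfolding lin_def
proof (elim exE)
  fix c assume "p = (\<Sum>m<r. smult (c m) (G m))"
  then have "smult a p = (\<Sum>m<r. smult (a * c m) (G m))" by (simp add: smult_sum_right)
  then show "\<exists>c. smult a p = (\<Sum>m<r. smult (c m) (G m))" by (rule exI[of _ "\<lambda>m. a * c m"])
qed

lemma lin_zero: "lin G r 0"
  unfolding lin_def by (rule exI[of _ "\<lambda>_. 0"]) simp

lemma lin_sum: "finite A \<Longrightarrow> (\<forall>x\<in>A. lin G r (f x)) \<Longrightarrow> lin G r (\<Sum>x\<in>A. f x)"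
  by (induction A rule: finite_induct) (auto intro: lin_add lin_zero)

lemma lin_base: "q < r \<Longrightarrow> lin G r (G q)"
  unfolding lin_def
proof (rule exI[of _ "\<lambda>m. if m = q then 1 else 0"])
  assume "q < r"
  then show "G q = (\<Sum>m<r. smult (if m = q then 1 else 0) (G m))"
    by (simp add: if_distrib[of "\<lambda>c. smult c _"] sum.delta cong: if_cong)
qed

lemma lin_trans: "(\<forall>q<r. lin H s (G q)) \<Longrightarrow> lin G r p \<Longrightarrow> lin H s p"
  unfolding lin_def[of G]
  by (elim exE) (auto intro!: lin_sum lin_smult)

lemma lin_uminus: "lin G r p \<Longrightarrow> lin G r (- p)"
  using lin_smult[of G r p "-1"] by simp

definition linS :: "(nat \<Rightarrow> 'a::comm_ring_1 poly) \<Rightarrow> nat set \<Rightarrow> 'a poly \<Rightarrow> bool" where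
  "linS G A p \<longleftrightarrow> (\<exists>c. p = (\<Sum>t\<in>A. smult (c t) (G t)))"

lemma linS_add: "linS G A p \<Longrightarrow> linS G A q \<Longrightarrow> linS G A (p + q)"
  unfolding linS_def
proof (elim exE)
  fix c d assume "p = (\<Sum>m\<in>A. smult (c m) (G m))" "q = (\<Sum>m\<in>A. smult (d m) (G m))"
  then have "p + q = (\<Sum>m\<in>A. smult (c m + d m) (G m))" by (simp add: sum.distrib smult_add_left)
  then show "\<exists>c. p + q = (\<Sum>m\<in>A. smult (c m) (G m))" by (rule exI[of _ "\<lambda>m. c m + d m"])
qed

lemma linS_smult: "linS G A p \<Longrightarrow> linS G A (smult a p)"
  unfolding linS_def
proof (elim exE)
  fix c assume "p = (\<Sum>m\<in>A. smult (c m) (G m))"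
  then have "smult a p = (\<Sum>m\<in>A. smult (a * c m) (G m))" by (simp add: smult_sum_right)
  then show "\<exists>c. smult a p = (\<Sum>m\<in>A. smult (c m) (G m))" by (rule exI[of _ "\<lambda>m. a * c m"])
qed

lemma linS_zero: "linS G A 0"
  unfolding linS_def by (rule exI[of _ "\<lambda>_. 0"]) simp

lemma linS_sum: "finite B \<Longrightarrow> (\<forall>x\<in>B. linS G A (f x)) \<Longrightarrow> linS G A (\<Sum>x\<in>B. f x)"
  by (induction B rule: finite_induct) (auto intro: linS_add linS_zero)

lemma linS_base: "finite A \<Longrightarrow> q \<in> A \<Longrightarrow> linS G A (G q)"
  unfolding linS_def
proof (rule exI[of _ "\<lambda>m. if m = q then 1 else 0"])
  assume "finite A" "q \<in> A"
  then show "G q = (\<Sum>m\<in>A. smult (if m = q then 1 else 0) (G m))"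
    by (simp add: if_distrib[of "\<lambda>c. smult c _"] sum.delta cong: if_cong)
qed

lemma lin_to_linS: "finite A \<Longrightarrow> (\<forall>q<r. e q \<in> A) \<Longrightarrow> lin (\<lambda>q. G (e q)) r p \<Longrightarrow> linS G A p"
  unfolding lin_def
  by (elim exE) (auto intro!: linS_sum linS_smult linS_base)

lemma reduce:
  fixes g :: "nat \<Rightarrow> 'a::field poly"
  assumes nz: "\<forall>m<r. g m \<noteq> 0"
  shows "\<exists>d. f0 + (\<Sum>m<r. smult (d m) (g m)) = 0 \<or>
     (\<forall>m<r. order 0 (f0 + (\<Sum>m<r. smult (d m) (g m))) \<noteq> order 0 (g m))"
proof (rule ccontr)
  define h where "h d = f0 + (\<Sum>m<r. smult (d m) (g m))" for d
  assume "\<not> ?thesis"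
  then have bad: "\<And>d. h d \<noteq> 0 \<and> (\<exists>m<r. order 0 (h d) = order 0 (g m))"
    unfolding h_def by blast
  have bnd: "order 0 (h d) < Suc (\<Sum>m<r. degree (g m))" for d
  proof -
    obtain m where m: "m < r" "order 0 (h d) = order 0 (g m)" using bad by blast
    have "order 0 (g m) \<le> degree (g m)" using nz m by (intro order_degree) auto
    also have "\<dots> \<le> (\<Sum>m<r. degree (g m))" using m by (intro member_le_sum) auto
    finally show ?thesis using m by simp
  qed
  obtain d0 where d0: "\<And>d. order 0 (h d) \<le> order 0 (h d0)"
    using Lattices_Big.ex_has_greatest_nat[of "\<lambda>d. True" "\<lambda>_. 0" "\<lambda>d. order 0 (h d)"] bnd by blast
  obtain m where m: "m < r" "order 0 (h d0) = order 0 (g m)" using bad by blast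
  define o' where "o' = order 0 (h d0)"
  define c where "c = coeff (h d0) o' / coeff (g m) o'"
  define d1 where "d1 = (\<lambda>m'. d0 m' - (if m' = m then c else 0))"
  have gco: "coeff (g m) o' \<noteq> 0" using m nz coeff_at_order o'_def by metis
  have "(\<Sum>m'<r. smult (d1 m') (g m')) = (\<Sum>m'<r. smult (d0 m') (g m')) - (\<Sum>m'<r. if m' = m then smult c (g m') else 0)"
    by (simp add: d1_def smult_diff_left sum_subtractf if_distrib[of "\<lambda>c. smult c _"] cong: if_cong)
  also have "(\<Sum>m'<r. if m' = m then smult c (g m') else 0) = smult c (g m)" using m by simp
  finally have h1: "h d1 = h d0 - smult c (g m)" by (simp add: h_def)
  have "\<forall>k<Suc o'. coeff (h d1) k = 0"
  proof (intro allI impI)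
    fix k assume k: "k < Suc o'"
    show "coeff (h d1) k = 0"
    proof (cases "k = o'")
      case True
      then show ?thesis using gco by (simp add: h1 c_def)
    next
      case False
      then have "k < o'" using k by simp
      then show ?thesis using m by (simp add: h1 coeff_below_order o'_def)
    qed
  qed
  then have "pX ^ Suc o' dvd h d1" using pX_pow_dvd_iff by blast
  then have "Suc o' \<le> order 0 (h d1)" using pX_pow_dvd_iff_order bad by blast
  then show False using d0[of d1] o'_def by simp
qed

lemma echelon:
  fixes f :: "nat \<Rightarrow> 'a::field poly" and \<alpha> :: "nat \<Rightarrow> nat"
  assumes fz: "\<forall>t. i \<le> t \<longrightarrow> t \<le> l \<longrightarrow> f t \<noteq> 0 \<and> \<alpha> t \<le> order 0 (f t)"
    and mono: "\<forall>s t. i \<le> s \<longrightarrow> s \<le> t \<longrightarrow> t \<le> l \<longrightarrow> \<alpha> s \<le> \<alpha> t"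
    and n: "Suc l - i = n"
  shows "\<exists>r e g. r \<le> Suc l - i \<and> (\<forall>m<r. i \<le> e m \<and> e m \<le> l) \<and>
     (\<forall>m<r. g m \<noteq> 0 \<and> \<alpha> (e m) \<le> order 0 (g m)) \<and> inj_on (\<lambda>m. order 0 (g m)) {..<r} \<and>
     (\<forall>m<r. lin (\<lambda>q. f (e q)) r (g m)) \<and> (\<forall>t. i \<le> t \<longrightarrow> t \<le> l \<longrightarrow> lin g r (f t))"
  using fz mono n
proof (induction n arbitrary: i)
  case 0
  then have "l < i" by simp
  then show ?case
    by (intro exI[of _ 0] exI[of _ "\<lambda>_. 0"] exI[of _ "\<lambda>_. 0"]) auto
next
  case (Suc n)
  then have il: "i \<le> l" by simp
  have "\<exists>r e g. r \<le> Suc l - Suc i \<and> (\<forall>m<r. Suc i \<le> e m \<and> e m \<le> l) \<and>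
     (\<forall>m<r. g m \<noteq> 0 \<and> \<alpha> (e m) \<le> order 0 (g m)) \<and> inj_on (\<lambda>m. order 0 (g m)) {..<r} \<and>
     (\<forall>m<r. lin (\<lambda>q. f (e q)) r (g m)) \<and> (\<forall>t. Suc i \<le> t \<longrightarrow> t \<le> l \<longrightarrow> lin g r (f t))"
    using Suc.prems by (intro Suc.IH) auto
  then obtain r e g where r: "r \<le> Suc l - Suc i" and e: "\<forall>m<r. Suc i \<le> e m \<and> e m \<le> l"
    and g: "\<forall>m<r. g m \<noteq> 0 \<and> \<alpha> (e m) \<le> order 0 (g m)" and inj: "inj_on (\<lambda>m. order 0 (g m)) {..<r}"
    and gl: "\<forall>m<r. lin (\<lambda>q. f (e q)) r (g m)" and fl: "\<forall>t. Suc i \<le> t \<longrightarrow> t \<le> l \<longrightarrow> lin g r (f t)"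
    by blast
  obtain d where d: "f i + (\<Sum>m<r. smult (d m) (g m)) = 0 \<or>
     (\<forall>m<r. order 0 (f i + (\<Sum>m<r. smult (d m) (g m))) \<noteq> order 0 (g m))"
    using reduce[of r g "f i"] g by blast
  define h where "h = f i + (\<Sum>m<r. smult (d m) (g m))"
  have fi: "f i = h - (\<Sum>m<r. smult (d m) (g m))" by (simp add: h_def)
  show ?case
  proof (cases "h = 0")
    case True
    have sl: "lin g r (\<Sum>m<r. smult (d m) (g m))"
      by (rule lin_sum) (auto intro: lin_smult lin_base)
    have "lin g r (f i)"
      using lin_uminus[OF sl] by (simp add: fi True)
    then have "\<forall>t. i \<le> t \<longrightarrow> t \<le> l \<longrightarrow> lin g r (f t)"
      using fl by (metis Suc_leI le_neq_implies_less)
    then show ?thesis using r e g inj gl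
      by (intro exI[of _ r] exI[of _ e] exI[of _ g]) (auto simp: Suc_diff_le il)
  next
    case False
    have hord: "\<forall>m<r. order 0 h \<noteq> order 0 (g m)" using d False h_def by blast
    define e' where "e' = e(r := i)"
    define g' where "g' = g(r := h)"
    have e'1: "\<forall>m<Suc r. i \<le> e' m \<and> e' m \<le> l" using e il by (auto simp: e'_def less_Suc_eq)
    have ah: "\<alpha> i \<le> order 0 h"
    proof -
      have "pX ^ \<alpha> i dvd h" unfolding h_def
      proof (intro dvd_add dvd_sum)
        show "pX ^ \<alpha> i dvd f i" using Suc.prems(1) il pX_pow_dvd_iff_order by blast
        fix m assume m: "m \<in> {..<r}"
        have "\<alpha> i \<le> \<alpha> (e m)" using Suc.prems(2) e m il by auto
        also have "\<dots> \<le> order 0 (g m)" using g m by auto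
        finally have "pX ^ \<alpha> i dvd g m" using pX_pow_dvd_iff_order g m by blast
        then show "pX ^ \<alpha> i dvd smult (d m) (g m)" by (simp add: dvd_smult)
      qed
      then show ?thesis using pX_pow_dvd_iff_order False by blast
    qed
    have g'1: "\<forall>m<Suc r. g' m \<noteq> 0 \<and> \<alpha> (e' m) \<le> order 0 (g' m)"
      using g False ah by (auto simp: g'_def e'_def less_Suc_eq)
    have inj': "inj_on (\<lambda>m. order 0 (g' m)) {..<Suc r}"
    proof -
      have "inj_on (\<lambda>m. order 0 (g' m)) {..<r}"
        using inj by (rule inj_on_cong[THEN iffD1, rotated]) (simp add: g'_def)
      moreover have "order 0 (g' r) \<notin> (\<lambda>m. order 0 (g' m)) ` {..<r}"
        using hord by (auto simp: g'_def)
      ultimately show ?thesis by (simp add: lessThan_Suc)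
    qed
    have base': "\<forall>q<r. lin (\<lambda>q. f (e' q)) (Suc r) (f (e q))"
    proof (intro allI impI)
      fix q assume q: "q < r"
      have "lin (\<lambda>q. f (e' q)) (Suc r) (f (e' q))" using q by (intro lin_base) simp
      then show "lin (\<lambda>q. f (e' q)) (Suc r) (f (e q))" using q by (simp add: e'_def)
    qed
    have gold: "\<forall>m<r. lin (\<lambda>q. f (e' q)) (Suc r) (g m)"
      using gl lin_trans[OF base'] by blast
    have gl': "\<forall>m<Suc r. lin (\<lambda>q. f (e' q)) (Suc r) (g' m)"
    proof (intro allI impI)
      fix m assume m: "m < Suc r"
      show "lin (\<lambda>q. f (e' q)) (Suc r) (g' m)"
      proof (cases "m = r")
        case True
        have fi': "lin (\<lambda>q. f (e' q)) (Suc r) (f i)"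
          using lin_base[of r "Suc r" "\<lambda>q. f (e' q)"] by (simp add: e'_def)
        have sl: "lin (\<lambda>q. f (e' q)) (Suc r) (\<Sum>m<r. smult (d m) (g m))"
          by (rule lin_sum) (auto intro: lin_smult gold[rule_format])
        have "lin (\<lambda>q. f (e' q)) (Suc r) h" unfolding h_def by (rule lin_add[OF fi' sl])
        then show ?thesis using True by (simp add: g'_def)
      next
        case False
        then show ?thesis using gold m by (simp add: g'_def)
      qed
    qed
    have gbase: "\<forall>q<r. lin g' (Suc r) (g q)"
    proof (intro allI impI)
      fix q assume q: "q < r"
      have "lin g' (Suc r) (g' q)" using q by (intro lin_base) simp
      then show "lin g' (Suc r) (g q)" using q by (simp add: g'_def)
    qed
    have fl': "\<forall>t. i \<le> t \<longrightarrow> t \<le> l \<longrightarrow> lin g' (Suc r) (f t)"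
    proof (intro allI impI)
      fix t assume t: "i \<le> t" "t \<le> l"
      show "lin g' (Suc r) (f t)"
      proof (cases "t = i")
        case True
        have "lin g' (Suc r) (g' r)" by (intro lin_base) simp
        then have "lin g' (Suc r) h" by (simp add: g'_def)
        note hl = this
        have sl: "lin g' (Suc r) (\<Sum>m<r. smult (d m) (g m))"
          by (rule lin_sum) (auto intro: lin_smult gbase[rule_format])
        have "lin g' (Suc r) (h + - (\<Sum>m<r. smult (d m) (g m)))"
          by (rule lin_add[OF hl lin_uminus[OF sl]])
        then show ?thesis using True fi by simp
      next
        case False
        then have "lin g r (f t)" using fl t by simp
        then show ?thesis by (rule lin_trans[OF gbase])
      qed
    qed
    have "Suc r \<le> Suc l - i" using r il by simp
    then show ?thesis using e'1 g'1 inj' gl' fl'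
      by (intro exI[of _ "Suc r"] exI[of _ e'] exI[of _ g']) blast
  qed
qed

lemma choose2_mono: "m \<le> n \<Longrightarrow> m choose 2 \<le> n choose 2"
  unfolding sum_lessThan_id_choose2[symmetric] by (rule sum_mono2) auto

lemma main_ind:
  fixes u v :: "'a::field_char_0" and \<alpha> \<beta> :: "nat \<Rightarrow> nat"
  assumes uv: "u \<noteq> 0" "v \<noteq> 0"
    and mono: "\<forall>s t. j0 \<le> s \<longrightarrow> s \<le> t \<longrightarrow> t \<le> l \<longrightarrow> \<alpha> s \<le> \<alpha> t"
  shows "Suc l - j = n \<Longrightarrow> j0 \<le> j \<Longrightarrow> (\<Sum>t\<in>{j..l}. smult (a t) (pX ^ \<alpha> t * [:v,u:] ^ \<beta> t)) \<noteq> 0 \<Longrightarrow>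
     order 0 (\<Sum>t\<in>{j..l}. smult (a t) (pX ^ \<alpha> t * [:v,u:] ^ \<beta> t))
       \<le> Max ((\<lambda>t. \<alpha> t + (Suc l - t choose 2)) ` {j..l})"
proof (induction n arbitrary: j a)
  case 0
  then have "{j..l} = {}" by auto
  then show ?case using 0 by simp
next
  case (Suc n)
  define f where "f t = pX ^ \<alpha> t * [:v,u:] ^ \<beta> t" for t
  define P where "P = (\<Sum>t\<in>{j..l}. smult (a t) (f t))"
  have P0: "P \<noteq> 0" using Suc.prems(3) by (simp add: P_def f_def)
  have jl: "j \<le> l" using Suc.prems(1) by simp
  have fz: "f t \<noteq> 0" for t using uv by (simp add: f_def)
  have ford: "order 0 (f t) = \<alpha> t" for t
  proof -
    have nz: "pX ^ \<alpha> t * [:v,u:] ^ \<beta> t \<noteq> (0::'a poly)" using uv by simp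
    have "order 0 (f t) = order 0 ((pX :: 'a poly) ^ \<alpha> t) + order 0 ([:v,u:] ^ \<beta> t)"
      unfolding f_def by (rule order_mult[OF nz])
    moreover have "order 0 ((pX :: 'a poly) ^ \<alpha> t) = \<alpha> t" using order_power_n_n[of "0::'a" "\<alpha> t"] by simp
    moreover have "order 0 ([:v,u:] ^ \<beta> t) = 0" using uv by (intro order_0I) simp
    ultimately show ?thesis by simp
  qed
  define M where "M = Max ((\<lambda>t. \<alpha> t + (Suc l - t choose 2)) ` {j..l})"
  have goal: "order 0 P \<le> M"
  proof (cases "\<exists>b. (\<Sum>t\<in>{Suc j..l}. smult (b t) (f t)) \<noteq> 0 \<and>
       order 0 P \<le> order 0 (\<Sum>t\<in>{Suc j..l}. smult (b t) (f t))")
    case True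
    then obtain b where b: "(\<Sum>t\<in>{Suc j..l}. smult (b t) (f t)) \<noteq> 0"
      "order 0 P \<le> order 0 (\<Sum>t\<in>{Suc j..l}. smult (b t) (f t))" by blast
    have ne: "{Suc j..l} \<noteq> {}"
    proof
      assume "{Suc j..l} = {}"
      then show False using b(1) by simp
    qed
    have "order 0 (\<Sum>t\<in>{Suc j..l}. smult (b t) (f t)) \<le> Max ((\<lambda>t. \<alpha> t + (Suc l - t choose 2)) ` {Suc j..l})"
      using Suc.IH[of "Suc j" b] Suc.prems b(1) by (simp add: f_def)
    also have "\<dots> \<le> M" unfolding M_def using ne by (intro Max_mono) auto
    finally show ?thesis using b(2) by simp
  next
    case False
    then have lt: "\<And>b. (\<Sum>t\<in>{Suc j..l}. smult (b t) (f t)) \<noteq> 0 \<Longrightarrow>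
        order 0 (\<Sum>t\<in>{Suc j..l}. smult (b t) (f t)) < order 0 P" by auto
    have "\<exists>r e g. r \<le> Suc l - Suc j \<and> (\<forall>m<r. Suc j \<le> e m \<and> e m \<le> l) \<and>
     (\<forall>m<r. g m \<noteq> 0 \<and> \<alpha> (e m) \<le> order 0 (g m)) \<and> inj_on (\<lambda>m. order 0 (g m)) {..<r} \<and>
     (\<forall>m<r. lin (\<lambda>q. f (e q)) r (g m)) \<and> (\<forall>t. Suc j \<le> t \<longrightarrow> t \<le> l \<longrightarrow> lin g r (f t))"
      by (rule echelon[of "Suc j" l f \<alpha> "Suc l - Suc j"]) (use fz ford mono Suc.prems(2) in auto)
    then obtain r e g where r: "r \<le> Suc l - Suc j" and e: "\<forall>m<r. Suc j \<le> e m \<and> e m \<le> l"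
      and g: "\<forall>m<r. g m \<noteq> 0 \<and> \<alpha> (e m) \<le> order 0 (g m)" and inj: "inj_on (\<lambda>m. order 0 (g m)) {..<r}"
      and gl: "\<forall>m<r. lin (\<lambda>q. f (e q)) r (g m)" and fl: "\<forall>t. Suc j \<le> t \<longrightarrow> t \<le> l \<longrightarrow> lin g r (f t)"
      by blast
    have gord: "order 0 (g m) < order 0 P" if m: "m < r" for m
    proof -
      have "linS f {Suc j..l} (g m)" using e gl m by (intro lin_to_linS[of _ r e]) auto
      then obtain b where "g m = (\<Sum>t\<in>{Suc j..l}. smult (b t) (f t))" unfolding linS_def by blast
      then show ?thesis using lt[of b] g m by auto
    qed
    define Fm where "Fm = case_nat P g"
    define Hm where "Hm = case_nat (f j) (\<lambda>m. f (e m))"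
    have Fnz: "\<forall>i<Suc r. Fm i \<noteq> 0" using P0 g by (auto simp: Fm_def split: nat.split)
    have Finj: "inj_on (\<lambda>i. order 0 (Fm i)) {..<Suc r}"
      unfolding inj_on_def
    proof (intro ballI impI)
      fix x y assume x: "x \<in> {..<Suc r}" and y: "y \<in> {..<Suc r}" and xy: "order 0 (Fm x) = order 0 (Fm y)"
      show "x = y"
      proof (cases x)
        case 0
        then show ?thesis using y xy gord by (cases y) (auto simp: Fm_def)
      next
        case (Suc x')
        show ?thesis
        proof (cases y)
          case 0
          then show ?thesis using Suc x xy gord[of x'] by (auto simp: Fm_def)
        next
          case (Suc y')
          then show ?thesis using \<open>x = Suc x'\<close> x y xy inj by (auto simp: Fm_def inj_on_def)
        qed
      qed
    qed
    have W: "wr (Suc r) Fm \<noteq> 0" by (rule wr_nonzero[OF Fnz Finj])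
    have shift: "lin Hm (Suc r) p" if "lin (\<lambda>q. f (e q)) r p" for p
    proof (rule lin_trans[OF _ that], intro allI impI)
      fix q assume "q < r"
      then have "lin Hm (Suc r) (Hm (Suc q))" by (intro lin_base) simp
      then show "lin Hm (Suc r) (f (e q))" by (simp add: Hm_def)
    qed
    have linH: "\<forall>i<Suc r. lin Hm (Suc r) (Fm i)"
    proof (intro allI impI)
      fix i assume i: "i < Suc r"
      show "lin Hm (Suc r) (Fm i)"
      proof (cases i)
        case 0
        have Pe: "P = smult (a j) (f j) + (\<Sum>t\<in>{Suc j..l}. smult (a t) (f t))"
          unfolding P_def using jl by (simp add: Icc_eq_insert_lb_nat)
        have l0: "lin Hm (Suc r) (f j)"
          using lin_base[of 0 "Suc r" Hm] by (simp add: Hm_def)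
        have l1: "lin Hm (Suc r) (\<Sum>t\<in>{Suc j..l}. smult (a t) (f t))"
        proof (rule lin_sum, simp, intro ballI lin_smult)
          fix t assume t: "t \<in> {Suc j..l}"
          then have "lin g r (f t)" using fl by auto
          then have "lin (\<lambda>q. f (e q)) r (f t)" by (rule lin_trans[OF gl])
          then show "lin Hm (Suc r) (f t)" by (rule shift)
        qed
        show ?thesis unfolding 0 Fm_def using lin_add[OF lin_smult[OF l0] l1] Pe by simp
      next
        case (Suc m)
        then have "m < r" using i by simp
        then show ?thesis using gl shift by (simp add: Fm_def Suc)
      qed
    qed
    obtain c where c: "wr (Suc r) Fm = smult c (wr (Suc r) Hm)" using wr_lin[OF linH] by blast
    have c0: "c \<noteq> 0" and WH: "wr (Suc r) Hm \<noteq> 0" using W c by auto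
    define aa where "aa = case_nat (\<alpha> j) (\<lambda>m. \<alpha> (e m))"
    define bb where "bb = case_nat (\<beta> j) (\<lambda>m. \<beta> (e m))"
    have Hform: "\<forall>i<Suc r. Hm i = pX ^ aa i * [:v,u:] ^ bb i"
      by (auto simp: Hm_def aa_def bb_def f_def split: nat.split)
    have up: "order 0 (wr (Suc r) Hm) \<le> (\<Sum>i<Suc r. aa i)" by (rule wr_upper[OF uv Hform WH])
    have sa: "(\<Sum>i<Suc r. aa i) = \<alpha> j + (\<Sum>m<r. \<alpha> (e m))"
      unfolding aa_def sum.lessThan_Suc_shift by simp
    have low: "pX ^ (\<Sum>i<Suc r. order 0 (Fm i)) dvd pX ^ (Suc r choose 2) * wr (Suc r) Fm"
      by (rule wr_lower) (use pX_pow_dvd_iff_order Fnz in blast)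
    have so: "(\<Sum>i<Suc r. order 0 (Fm i)) = order 0 P + (\<Sum>m<r. order 0 (g m))"
      unfolding Fm_def sum.lessThan_Suc_shift by simp
    have nzp: "pX ^ (Suc r choose 2) * wr (Suc r) Fm \<noteq> 0" using W by simp
    have "(\<Sum>i<Suc r. order 0 (Fm i)) \<le> order 0 (pX ^ (Suc r choose 2) * wr (Suc r) Fm)"
      using low pX_pow_dvd_iff_order[OF nzp] by blast
    also have "\<dots> = (Suc r choose 2) + order 0 (wr (Suc r) Fm)"
      using order_mult[OF nzp, of 0] order_power_n_n[of "0::'a" "Suc r choose 2"] by simp
    also have "order 0 (wr (Suc r) Fm) = order 0 (wr (Suc r) Hm)" using c c0 by (simp add: order_smult)
    finally have "order 0 P + (\<Sum>m<r. order 0 (g m)) \<le> (Suc r choose 2) + \<alpha> j + (\<Sum>m<r. \<alpha> (e m))"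
      using up sa so by linarith
    moreover have "(\<Sum>m<r. \<alpha> (e m)) \<le> (\<Sum>m<r. order 0 (g m))" using g by (intro sum_mono) auto
    ultimately have "order 0 P \<le> \<alpha> j + (Suc r choose 2)" by linarith
    also have "\<dots> \<le> \<alpha> j + (Suc l - j choose 2)" using r jl by (intro add_left_mono choose2_mono) simp
    also have "\<dots> \<le> M" unfolding M_def using jl by (intro Max_ge) auto
    finally show ?thesis .
  qed
  then show ?case by (simp add: P_def M_def f_def)
qed

theorem theorem2p1:
  fixes u v :: "'a::field_char_0"
    and a :: "nat \<Rightarrow> 'a"
    and alpha beta :: "nat \<Rightarrow> nat"
    and l :: nat
  assumes "u * v \<noteq> 0"
    and "\<And>i j. 1 \<le> i \<Longrightarrow> i \<le> j \<Longrightarrow> j \<le> l \<Longrightarrow> alpha i \<le> alpha j"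
    and "(\<Sum>j = 1..l. smult (a j) ([:0, 1:] ^ alpha j * [:v, u:] ^ beta j)) \<noteq> 0"
  shows "val (\<Sum>j = 1..l. smult (a j) ([:0, 1:] ^ alpha j * [:v, u:] ^ beta j))
           \<le> Max ((\<lambda>j. alpha j + ((l + 1 - j) choose 2)) ` {1..l})"
proof -
  have uv: "u \<noteq> 0" "v \<noteq> 0" using assms(1) by auto
  have mono: "\<forall>s t. 1 \<le> s \<longrightarrow> s \<le> t \<longrightarrow> t \<le> l \<longrightarrow> alpha s \<le> alpha t" using assms(2) by blast
  have "order 0 (\<Sum>j = 1..l. smult (a j) ([:0, 1:] ^ alpha j * [:v, u:] ^ beta j))
      \<le> Max ((\<lambda>t. alpha t + (Suc l - t choose 2)) ` {1..l})"
    by (rule main_ind[OF uv mono refl]) (use assms(3) in auto)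
  then show ?thesis using val_eq_order[OF assms(3)] by simp
qed
end
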